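(* Let $X=\{v_1,\dots,v_n\}$ be a set of $n$ unit vectors in $\mathbb{R}^d$ such that $\langle v_i,v_j\rangle\in\{a,b\}$ for all $i\neq j$, where $-1\le a<b<1$. Let $G=(\langle v_i,v_j\rangle)_{i,j=1}^n$ be its Gram matrix, $J$ the $n\times n$ all-ones matrix, and \[ S=\frac{2G-(a+b)J+(a+b-2)I}{b-a}. \] Let $\lambda_1\ge\dots\ge\lambda_n$ be the eigenvalues of $S$ counted with multiplicity. (i) If $a+b\ge 0$, then $\lambda_i=\frac{a+b-2}{b-a}$ for all $d+1\le i\le n-1$ and $\lambda_n\le\frac{a+b-2}{b-a}$; i.e. $S$ has smallest eigenvalue $\lambda_n$ (counted once) and second smallest eigenvalue $\frac{a+b-2}{b-a}$ with multiplicity at least $n-d-1$. (ii) If $a+b<0$, then the smallest eigenvalue of $S$ is $\frac{a+b-2}{b-a}$, with multiplicity at least $n-d-1$.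
   Context: $S$ is a Seidel matrix: a real symmetric matrix with zero diagonal and off-diagonal entries $\pm1$ (the entry is $+1$ where the inner product is $b$ and $-1$ where it is $a$). *)

theory Defs
  imports "Jordan_Normal_Form.Char_Poly"
begin

text \<open>For a real
  symmetric matrix this multiset has exactly dim rows elements.\<close>
definition eigenvalue_mset :: "real mat \<Rightarrow> real multiset" where
  "eigenvalue_mset A = proots (char_poly A)"

text \<open>The eigenvalues listed in non-increasing order: lambda_1 \<ge> ... \<ge> lambda_n;
  lambda_i is  eigs_desc A ! (i - 1).\<close>
definition eigs_desc :: "real mat \<Rightarrow> real list" where
  "eigs_desc A = rev (sorted_list_of_multiset (eigenvalue_mset A))"

definition gram :: "nat \<Rightarrow> (nat \<Rightarrow> real vec) \<Rightarrow> real mat" where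
  "gram n v = mat n n (\<lambda>(i, j). v i \<bullet> v j)"

definition seidel_of :: "nat \<Rightarrow> (nat \<Rightarrow> real vec) \<Rightarrow> real \<Rightarrow> real \<Rightarrow> real mat" where
  "seidel_of n v a b =
     (1 / (b - a)) \<cdot>\<^sub>m (2 \<cdot>\<^sub>m gram n v - (a + b) \<cdot>\<^sub>m mat n n (\<lambda>_. 1)
        + (a + b - 2) \<cdot>\<^sub>m 1\<^sub>m n)"

end

theory Submission
  imports Defs "Jordan_Normal_Form.Jordan_Normal_Form_Uniqueness" "Jordan_Normal_Form.Jordan_Normal_Form_Existence"
begin

interpretation of_real_poly_hom: map_poly_inj_comm_ring_hom "of_real :: real \<Rightarrow> complex" ..

lemma complex_eig_real:
  fixes A :: "real mat" and a :: complex
  assumes A: "A \<in> carrier_mat n n" and sym: "\<And>i j. i<n \<Longrightarrow> j<n \<Longrightarrow> A$$(i,j) = A$$(j,i)"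
  and ev: "eigenvector (map_mat of_real A) v a"
  shows "cnj a = a"
proof -
  let ?B = "map_mat complex_of_real A"
  from ev have v: "v \<in> carrier_vec n" and v0: "v \<noteq> 0\<^sub>v n" and eq: "?B *\<^sub>v v = a \<cdot>\<^sub>v v"
    unfolding eigenvector_def using A by auto
  have comp: "(\<Sum>j<n. of_real (A$$(i,j)) * v$j) = a * v$i" if i: "i<n" for i
  proof -
    have "(?B *\<^sub>v v) $ i = (a \<cdot>\<^sub>v v) $ i" using eq by simp
    then show ?thesis using i A v by (simp add: scalar_prod_def row_def lessThan_atLeast0)
  qed
  define N where "N = (\<Sum>i<n. cnj (v$i) * v$i)"
  define T where "T = (\<Sum>i<n. cnj (v$i) * (\<Sum>j<n. of_real (A$$(i,j)) * v$j))"
  have TN: "T = a * N" using comp by (simp add: T_def N_def sum_distrib_left mult_ac)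
  have "cnj T = (\<Sum>i<n. \<Sum>j<n. of_real (A$$(i,j)) * v$i * cnj (v$j))"
    by (simp add: T_def cnj_sum sum_distrib_left mult_ac)
  also have "\<dots> = (\<Sum>j<n. \<Sum>i<n. of_real (A$$(i,j)) * v$i * cnj (v$j))"
    by (rule sum.swap)
  also have "\<dots> = T"
    by (simp add: T_def sum_distrib_left mult_ac sym)
  finally have cT: "cnj T = T" .
  have Nr: "N = of_real (\<Sum>i<n. (cmod (v$i))^2)"
    unfolding N_def of_real_sum by (rule sum.cong, simp, metis complex_norm_square mult.commute of_real_power)
  obtain i where i: "i < n" "v$i \<noteq> 0" using v v0 by (metis eq_vecI carrier_vecD index_zero_vec)
  have "(\<Sum>i<n. (cmod (v$i))^2) > 0"
    by (rule sum_pos2[of _ i], use i in auto)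
  then have N0: "N \<noteq> 0" using Nr by (metis of_real_eq_0_iff less_irrefl)
  have cN: "cnj N = N" unfolding Nr by simp
  have "cnj a * N = a * N" using cT TN cN by (metis complex_cnj_mult)
  then show ?thesis using N0 by simp
qed

lemma sym_real_split:
  fixes A :: "real mat"
  assumes A: "A \<in> carrier_mat n n" and sym: "\<And>i j. i<n \<Longrightarrow> j<n \<Longrightarrow> A$$(i,j) = A$$(j,i)"
  shows "\<exists>es. char_poly A = (\<Prod>e\<leftarrow>es. [:-e,1:])"
proof -
  let ?B = "map_mat complex_of_real A"
  have B: "?B \<in> carrier_mat n n" using A by auto
  obtain as where as: "char_poly ?B = (\<Prod>a\<leftarrow>as. [:- a, 1:])"
    using char_poly_factorized[OF B] by blast
  have real: "a = of_real (Re a)" if a: "a \<in> set as" for a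
  proof -
    have "poly (char_poly ?B) a = 0" unfolding as using a by (rule linear_poly_root)
    then have "eigenvalue ?B a" using eigenvalue_root_char_poly[OF B] by simp
    then obtain v where "eigenvector ?B v a" unfolding eigenvalue_def by blast
    from complex_eig_real[OF A sym this] have "cnj a = a" .
    then show ?thesis by (metis Reals_cnj_iff complex_is_Real_iff of_real_Re)
  qed
  have "map_poly complex_of_real (char_poly A) = char_poly ?B"
    by (rule of_real_hom.char_poly_hom[OF A, symmetric])
  also have "\<dots> = (\<Prod>a\<leftarrow>as. [:- a, 1:])" by (rule as)
  also have "\<dots> = (\<Prod>a\<leftarrow>map Re as. [:- of_real a, 1:])"
    unfolding map_map o_def by (rule arg_cong[of _ _ prod_list], rule map_cong, simp, subst real, auto)
  also have "\<dots> = map_poly complex_of_real (\<Prod>e\<leftarrow>map Re as. [:-e,1:])"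
    by (simp add: of_real_poly_hom.hom_prod_list o_def)
  finally show ?thesis unfolding of_real_poly_hom.eq_iff by blast
qed


lemma proots_linear_prod: "proots (\<Prod>a\<leftarrow>xs. [:-a,1:]) = mset (xs :: real list)"
proof (induct xs)
  case (Cons x xs)
  have "proots (\<Prod>a\<leftarrow>x#xs. [:-a,1:]) = proots ([:-x,1:] * (\<Prod>a\<leftarrow>xs. [:-a,1:]))" by simp
  also have "\<dots> = proots [:-x,1:] + proots (\<Prod>a\<leftarrow>xs. [:-a,1:])"
    by (rule proots_mult, auto simp: prod_list_zero_iff)
  finally show ?case using Cons by (simp add: proots_linear_factor)
qed simp

lemma sym_kernel_sq:
  fixes B :: "real mat"
  assumes B: "B \<in> carrier_mat n n" and sym: "\<And>i j. i<n \<Longrightarrow> j<n \<Longrightarrow> B$$(i,j) = B$$(j,i)"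
  shows "mat_kernel (B ^\<^sub>m 2) = mat_kernel (B ^\<^sub>m 1)"
proof -
  have BT: "transpose_mat B = B" using B sym by (intro eq_matI, auto)
  have p2: "B ^\<^sub>m 2 = B * B" using B by (simp add: numeral_2_eq_2)
  have p1: "B ^\<^sub>m 1 = B" using B by simp
  have B2: "B * B \<in> carrier_mat n n" using B by simp
  show ?thesis unfolding p2 p1 mat_kernel[OF B] mat_kernel[OF B2]
  proof (intro Collect_cong iffI conjI; elim conjE)
    fix x :: "real vec" assume x: "x \<in> carrier_vec n" and xx: "B * B *\<^sub>v x = 0\<^sub>v n"
    define y where "y = B *\<^sub>v x"
    have y: "y \<in> carrier_vec n" using B x y_def by simp
    have By: "B *\<^sub>v y = 0\<^sub>v n" using xx B x unfolding y_def by (simp add: assoc_mult_mat_vec)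
    have "y \<bullet> y = y \<bullet> (B *\<^sub>v x)" unfolding y_def ..
    also have "\<dots> = (transpose_mat B *\<^sub>v y) \<bullet> x" using transpose_vec_mult_scalar[OF B x y] by simp
    also have "\<dots> = 0" using By BT x by simp
    finally have "y \<bullet> y = 0" .
    then have "y \<bullet>c y = 0" by simp
    then show "B *\<^sub>v x = 0\<^sub>v n" using conjugate_square_eq_0_vec[OF y] y_def by simp
  next
    fix x :: "real vec" assume x: "x \<in> carrier_vec n" and xx: "B *\<^sub>v x = 0\<^sub>v n"
    have "B * B *\<^sub>v x = B *\<^sub>v (B *\<^sub>v x)" using B x by (simp add: assoc_mult_mat_vec)
    also have "\<dots> = 0\<^sub>v n" unfolding xx using B by (intro eq_vecI, auto simp: scalar_prod_def)
    finally show "B * B *\<^sub>v x = 0\<^sub>v n" .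
  qed auto
qed

lemma sym_dim_gen:
  fixes A :: "real mat"
  assumes A: "A \<in> carrier_mat n n" and sym: "\<And>i j. i<n \<Longrightarrow> j<n \<Longrightarrow> A$$(i,j) = A$$(j,i)"
  shows "dim_gen_eigenspace A ev 2 = dim_gen_eigenspace A ev 1"
proof -
  let ?B = "char_matrix A ev"
  have B: "?B \<in> carrier_mat n n" using A by (simp add: char_matrix_def)
  have sB: "?B$$(i,j) = ?B$$(j,i)" if "i<n" "j<n" for i j
    using A that sym by (auto simp: char_matrix_def)
  have K: "mat_kernel (?B ^\<^sub>m 2) = mat_kernel ?B" using sym_kernel_sq[OF B sB] B by simp
  show ?thesis unfolding dim_gen_eigenspace_def kernel_dim_def using B by (simp add: K)
qed

lemma sum_list_min_eq:
  assumes "sum_list (map (min 2) xs) = sum_list (map (min (1::nat)) xs)"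
  shows "\<forall>x\<in>set xs. x \<le> 1"
  using assms
proof (induct xs)
  case (Cons x xs)
  have "min 1 x \<le> min 2 x" by simp
  moreover have "sum_list (map (min 1) xs) \<le> sum_list (map (min (2::nat)) xs)"
    by (rule sum_list_mono, simp)
  ultimately have "min 2 x = min 1 x" "sum_list (map (min 2) xs) = sum_list (map (min (1::nat)) xs)"
    using Cons(2) by auto
  then show ?case using Cons(1) by auto
qed simp

lemma jordan_matrix_diag:
  assumes "i < length n_as" "j < length n_as" "i \<noteq> j" "\<forall>p\<in>set n_as. fst p = 1"
  shows "jordan_matrix n_as $$ (i,j) = 0"
  using assms
proof (induct n_as arbitrary: i j)
  case (Cons p n_as)
  obtain a where p: "p = (1,a)" using Cons(5) by (cases p, auto)
  have sl: "sum_list (map fst n_as) = length n_as" using Cons(5)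
    by (induct n_as, auto)
  have JM: "jordan_matrix (p#n_as) = four_block_mat (jordan_block 1 a) (0\<^sub>m 1 (length n_as)) (0\<^sub>m (length n_as) 1) (jordan_matrix n_as)"
    unfolding p jordan_matrix_def by (simp add: Let_def jordan_matrix_def[symmetric] sl)
  show ?case unfolding JM using Cons(2-5) sl Cons(1)[of "i - 1" "j - 1"]
    by (subst index_mat_four_block, auto simp: jordan_block_def)
qed simp

lemma sym_diag:
  fixes A :: "real mat"
  assumes A: "A \<in> carrier_mat n n" and sym: "\<And>i j. i<n \<Longrightarrow> j<n \<Longrightarrow> A$$(i,j) = A$$(j,i)"
    and split: "char_poly A = (\<Prod>e\<leftarrow>es. [:-e,1:])"
  shows "\<exists>P Q D. P \<in> carrier_mat n n \<and> Q \<in> carrier_mat n n \<and> D \<in> carrier_mat n n \<and>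
     P * Q = 1\<^sub>m n \<and> Q * P = 1\<^sub>m n \<and> A = P * D * Q \<and> (\<forall>i<n. \<forall>j<n. i \<noteq> j \<longrightarrow> D$$(i,j) = 0) \<and>
     proots (char_poly A) = mset (diag_mat D)"
proof -
  obtain n_as where jnf: "jordan_nf A n_as" using jordan_nf_exists[OF A split] by blast
  have ones: "\<forall>p\<in>set n_as. fst p = 1"
  proof
    fix p assume p: "p \<in> set n_as"
    obtain m e where pe: "p = (m,e)" by force
    have "(\<Sum>n\<leftarrow>map fst [(n, e')\<leftarrow>n_as . e' = e]. min 2 n) = (\<Sum>n\<leftarrow>map fst [(n, e')\<leftarrow>n_as . e' = e]. min 1 n)"
      using dim_gen_eigenspace[OF jnf, of e 2] dim_gen_eigenspace[OF jnf, of e 1] sym_dim_gen[OF A sym, of e] by simp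
    from sum_list_min_eq[OF this] have "m \<le> 1" using p pe by force
    moreover have "m \<noteq> 0" using jnf p pe unfolding jordan_nf_def by force
    ultimately show "fst p = 1" using pe by simp
  qed
  let ?J = "jordan_matrix n_as"
  have sl: "sum_list (map fst n_as) = length n_as" using ones by (induct n_as, auto)
  from jnf have sim: "similar_mat A ?J" unfolding jordan_nf_def by auto
  then obtain P Q where wit: "similar_mat_wit A ?J P Q" unfolding similar_mat_def by blast
  from wit A have PQ: "P \<in> carrier_mat n n" "Q \<in> carrier_mat n n" "?J \<in> carrier_mat n n"
      "P * Q = 1\<^sub>m n" "Q * P = 1\<^sub>m n" "A = P * ?J * Q"
    unfolding similar_mat_wit_def Let_def by auto
  have "dim_row ?J = n" using PQ(3) by auto
  then have ln: "length n_as = n" using sl by (metis jordan_matrix_dim(1))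
  have diag: "\<forall>i<n. \<forall>j<n. i \<noteq> j \<longrightarrow> ?J$$(i,j) = 0"
    using jordan_matrix_diag[OF _ _ _ ones] ln by auto
  have ut: "upper_triangular ?J" using diag PQ(3) unfolding upper_triangular_def by auto
  have "char_poly A = char_poly ?J" by (rule char_poly_similar[OF sim])
  also have "\<dots> = (\<Prod> a \<leftarrow> diag_mat ?J. [:- a, 1:])" by (rule char_poly_upper_triangular[OF PQ(3) ut])
  finally have "proots (char_poly A) = mset (diag_mat ?J)" by (simp add: proots_linear_prod)
  then show ?thesis using PQ diag by blast
qed


lemma underdet:
  fixes f :: "nat \<Rightarrow> nat \<Rightarrow> real"
  assumes "finite I" "card I > k"
  shows "\<exists>c. (\<exists>i\<in>I. c i \<noteq> 0) \<and> (\<forall>j<k. (\<Sum>i\<in>I. f j i * c i) = 0)"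
  using assms
proof (induct k arbitrary: I f)
  case 0
  then have "I \<noteq> {}" by auto
  then show ?case by (intro exI[of _ "\<lambda>_. 1"], auto)
next
  case (Suc k)
  show ?case
  proof (cases "\<forall>i\<in>I. f k i = 0")
    case True
    from Suc(1)[OF Suc(2), of f] Suc(3) obtain c where c: "\<exists>i\<in>I. c i \<noteq> 0" "\<forall>j<k. (\<Sum>i\<in>I. f j i * c i) = 0"
      by auto
    show ?thesis using c True by (intro exI[of _ c], auto simp: less_Suc_eq)
  next
    case False
    then obtain i0 where i0: "i0 \<in> I" "f k i0 \<noteq> 0" by auto
    define I' where "I' = I - {i0}"
    have fI': "finite I'" using Suc(2) I'_def by auto
    have cI': "card I' > k" using Suc(3) i0 Suc(2) unfolding I'_def by (simp add: card_Diff_singleton)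
    define g where "g j i = f j i - f j i0 * f k i / f k i0" for j i
    from Suc(1)[OF fI' cI', of g] obtain c' where c': "\<exists>i\<in>I'. c' i \<noteq> 0" "\<forall>j<k. (\<Sum>i\<in>I'. g j i * c' i) = 0"
      by auto
    define Sk where "Sk = (\<Sum>i\<in>I'. f k i * c' i)"
    define c where "c = c'(i0 := - Sk / f k i0)"
    have split: "(\<Sum>i\<in>I. f j i * c i) = f j i0 * (- Sk / f k i0) + (\<Sum>i\<in>I'. f j i * c' i)" for j
    proof -
      have "(\<Sum>i\<in>I. f j i * c i) = f j i0 * c i0 + (\<Sum>i\<in>I'. f j i * c i)"
        unfolding I'_def using Suc(2) i0 by (simp add: sum.remove)
      also have "(\<Sum>i\<in>I'. f j i * c i) = (\<Sum>i\<in>I'. f j i * c' i)"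
        by (rule sum.cong, auto simp: c_def I'_def)
      finally show ?thesis by (simp add: c_def)
    qed
    have eqs: "(\<Sum>i\<in>I. f j i * c i) = 0" if j: "j < Suc k" for j
    proof (cases "j = k")
      case True
      then show ?thesis unfolding split Sk_def using i0 by simp
    next
      case False
      with j have jk: "j < k" by simp
      have "0 = (\<Sum>i\<in>I'. g j i * c' i)" using c' jk by simp
      also have "\<dots> = (\<Sum>i\<in>I'. f j i * c' i) - f j i0 / f k i0 * Sk"
        unfolding g_def Sk_def by (simp add: algebra_simps sum_subtractf sum_distrib_left)
      finally show ?thesis unfolding split by simp
    qed
    have nz: "\<exists>i\<in>I. c i \<noteq> 0" using c' unfolding c_def I'_def by auto
    show ?thesis using nz eqs by blast
  qed
qed

lemma mat_vec_index_sum: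
  "M \<in> carrier_mat k n \<Longrightarrow> v \<in> carrier_vec n \<Longrightarrow> j < k \<Longrightarrow> (M *\<^sub>v v)$j = (\<Sum>i\<in>{0..<n}. M$$(j,i) * v$i)"
  by (auto simp: scalar_prod_def row_def)

lemma real_vec_self_pos:
  fixes y :: "real vec"
  assumes y: "y \<in> carrier_vec n" "y \<noteq> 0\<^sub>v n"
  shows "y \<bullet> y > 0"
proof -
  have ge: "y \<bullet> y \<ge> 0" unfolding scalar_prod_def by (intro sum_nonneg, auto)
  have "y \<bullet> y \<noteq> 0" using conjugate_square_eq_0_vec[OF y(1)] y(2) by simp
  with ge show ?thesis by simp
qed

lemma inertia:
  fixes A P Q D U :: "real mat"
  assumes A: "A \<in> carrier_mat n n" and P: "P \<in> carrier_mat n n" and Q: "Q \<in> carrier_mat n n"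
    and D: "D \<in> carrier_mat n n"
    and QP: "Q * P = 1\<^sub>m n" and PQ: "P * Q = 1\<^sub>m n" and AD: "A = P * D * Q"
    and diag: "\<forall>i<n. \<forall>j<n. i \<noteq> j \<longrightarrow> D$$(i,j) = 0"
    and sym: "transpose_mat A = A"
    and U: "U \<in> carrier_mat k n"
    and neg: "\<And>x. x \<in> carrier_vec n \<Longrightarrow> U *\<^sub>v x = 0\<^sub>v k \<Longrightarrow> x \<bullet> (A *\<^sub>v x) \<le> 0"
  shows "card {i. i < n \<and> D$$(i,i) > 0} \<le> k"
proof (rule ccontr)
  define I where "I = {i. i < n \<and> D$$(i,i) > 0}"
  assume "\<not> ?thesis"
  then have cI: "card I > k" unfolding I_def by simp
  have fI: "finite I" unfolding I_def by auto
  from underdet[OF fI cI, of "\<lambda>j i. (U * P) $$ (j,i)"] obtain c where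
    c: "\<exists>i\<in>I. c i \<noteq> 0" "\<forall>j<k. (\<Sum>i\<in>I. (U * P) $$ (j,i) * c i) = 0" by blast
  define cv where "cv = vec n (\<lambda>i. if i \<in> I then c i else 0)"
  have cv: "cv \<in> carrier_vec n" unfolding cv_def by simp
  define x where "x = P *\<^sub>v cv"
  have x: "x \<in> carrier_vec n" unfolding x_def using P cv by simp
  have UP: "U * P \<in> carrier_mat k n" using U P by simp
  have "U *\<^sub>v x = (U * P) *\<^sub>v cv" unfolding x_def using U P cv by (simp add: assoc_mult_mat_vec)
  also have "\<dots> = 0\<^sub>v k"
  proof (rule eq_vecI)
    fix j assume "j < dim_vec (0\<^sub>v k :: real vec)"
    then have j: "j < k" by simp
    have "((U * P) *\<^sub>v cv) $ j = (\<Sum>i\<in>{0..<n}. (U * P) $$ (j,i) * cv $ i)"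
      by (rule mat_vec_index_sum[OF UP cv j])
    also have "\<dots> = (\<Sum>i\<in>I. (U * P) $$ (j,i) * c i)"
      unfolding cv_def by (rule sum.mono_neutral_cong_right, auto simp: I_def)
    also have "\<dots> = 0" using c j by simp
    finally show "((U * P) *\<^sub>v cv) $ j = 0\<^sub>v k $ j" using j by simp
  qed (insert UP, auto)
  finally have Ux: "U *\<^sub>v x = 0\<^sub>v k" .
  from neg[OF x Ux] have le: "x \<bullet> (A *\<^sub>v x) \<le> 0" .
  have APD: "A * P = P * D"
  proof -
    have "A * P = P * D * (Q * P)" unfolding AD using P D Q by (simp add: assoc_mult_mat[of _ n n _ n _ n])
    also have "\<dots> = P * D" unfolding QP using P D by simp
    finally show ?thesis .
  qed
  define G where "G = transpose_mat P * P"
  have G: "G \<in> carrier_mat n n" unfolding G_def using P by simp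
  have GD: "G * D = D * G"
  proof -
    have "G * D = transpose_mat P * (A * P)" unfolding G_def APD using P D by (simp add: assoc_mult_mat[of _ n n _ n _ n])
    also have "\<dots> = transpose_mat (transpose_mat P * (A * P))"
    proof -
      have "transpose_mat (transpose_mat P * (A * P)) = transpose_mat (A * P) * P"
        using P A by (simp add: transpose_mult[of _ n n _ n])
      also have "\<dots> = transpose_mat P * transpose_mat A * P"
        using P A by (simp add: transpose_mult[of _ n n _ n])
      also have "\<dots> = transpose_mat P * (A * P)" unfolding sym using P A by (simp add: assoc_mult_mat[of _ n n _ n _ n])
      finally show ?thesis by simp
    qed
    also have "\<dots> = transpose_mat (G * D)" unfolding G_def APD using P D by (simp add: assoc_mult_mat[of _ n n _ n _ n])
    also have "\<dots> = transpose_mat D * transpose_mat G" using G D by (simp add: transpose_mult[of _ n n _ n])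
    also have "transpose_mat G = G" unfolding G_def using P by (simp add: transpose_mult[of _ n n _ n])
    also have "transpose_mat D = D" using D diag by (intro eq_matI, auto, metis)
    finally show ?thesis .
  qed
  have Gcomm: "G$$(i,j) * D$$(j,j) = D$$(i,i) * G$$(i,j)" if "i<n" "j<n" for i j
  proof -
    have "(G * D) $$ (i,j) = (D * G) $$ (i,j)" using GD by simp
    moreover have "(G * D) $$ (i,j) = (\<Sum>t\<in>{0..<n}. G$$(i,t) * D$$(t,j))"
      using that G D by (simp add: scalar_prod_def row_def col_def)
    moreover have "(\<Sum>t\<in>{0..<n}. G$$(i,t) * D$$(t,j)) = G$$(i,j) * D$$(j,j)"
      by (rule trans[OF sum.remove[of _ j]], use that diag in \<open>auto intro!: sum.neutral\<close>)
    moreover have "(D * G) $$ (i,j) = (\<Sum>t\<in>{0..<n}. D$$(i,t) * G$$(t,j))"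
      using that G D by (simp add: scalar_prod_def row_def col_def)
    moreover have "(\<Sum>t\<in>{0..<n}. D$$(i,t) * G$$(t,j)) = D$$(i,i) * G$$(i,j)"
      by (rule trans[OF sum.remove[of _ i]], use that diag in \<open>auto intro!: sum.neutral\<close>)
    ultimately show ?thesis by simp
  qed
  have gram: "(P *\<^sub>v u) \<bullet> (P *\<^sub>v v) = (\<Sum>i\<in>{0..<n}. u$i * (\<Sum>j\<in>{0..<n}. G$$(i,j) * v$j))"
    if u: "u \<in> carrier_vec n" and v: "v \<in> carrier_vec n" for u v
  proof -
    have "(P *\<^sub>v u) \<bullet> (P *\<^sub>v v) = (transpose_mat P *\<^sub>v (P *\<^sub>v v)) \<bullet> u"
      using transpose_vec_mult_scalar[OF P u, of "P *\<^sub>v v"] P u v comm_scalar_prod[of "P *\<^sub>v u" n "P *\<^sub>v v"] by simp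
    also have "\<dots> = (G *\<^sub>v v) \<bullet> u" unfolding G_def using P v by (simp add: assoc_mult_mat_vec)
    also have "\<dots> = u \<bullet> (G *\<^sub>v v)" using G u v by (simp add: comm_scalar_prod[of _ n])
    also have "\<dots> = (\<Sum>i\<in>{0..<n}. u$i * (\<Sum>j\<in>{0..<n}. G$$(i,j) * v$j))"
      using G u v by (simp add: scalar_prod_def row_def)
    finally show ?thesis .
  qed
  define w where "w = vec n (\<lambda>i. sqrt (D$$(i,i)) * cv$i)"
  have w: "w \<in> carrier_vec n" unfolding w_def by simp
  define dcv where "dcv = vec n (\<lambda>i. D$$(i,i) * cv$i)"
  have dcv: "dcv \<in> carrier_vec n" unfolding dcv_def by simp
  have Dcv: "D *\<^sub>v cv = dcv"
  proof (rule eq_vecI)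
    fix i assume "i < dim_vec dcv"
    then have i: "i < n" unfolding dcv_def by simp
    have "(D *\<^sub>v cv) $ i = (\<Sum>t\<in>{0..<n}. D$$(i,t) * cv$t)" using D cv i by (simp add: scalar_prod_def row_def)
    also have "\<dots> = D$$(i,i) * cv$i"
      by (rule trans[OF sum.remove[of _ i]], use i diag in \<open>auto intro!: sum.neutral\<close>)
    finally show "(D *\<^sub>v cv) $ i = dcv $ i" unfolding dcv_def using i by simp
  qed (insert D dcv, auto)
  have Ax: "A *\<^sub>v x = P *\<^sub>v dcv"
  proof -
    have "A *\<^sub>v x = (A * P) *\<^sub>v cv" unfolding x_def using A P cv by (simp add: assoc_mult_mat_vec)
    also have "\<dots> = P *\<^sub>v (D *\<^sub>v cv)" unfolding APD using P D cv by (simp add: assoc_mult_mat_vec)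
    finally show ?thesis unfolding Dcv .
  qed
  have "x \<bullet> (A *\<^sub>v x) = x \<bullet> (P *\<^sub>v dcv)" by (simp only: Ax)
  also have "\<dots> = (\<Sum>i\<in>{0..<n}. cv$i * (\<Sum>j\<in>{0..<n}. G$$(i,j) * dcv$j))"
    unfolding x_def by (rule gram[OF cv dcv])
  also have "\<dots> = (\<Sum>i\<in>{0..<n}. w$i * (\<Sum>j\<in>{0..<n}. G$$(i,j) * w$j))"
  proof (rule sum.cong[OF refl])
    fix i assume i: "i \<in> {0..<n}"
    have "cv$i * (\<Sum>j\<in>{0..<n}. G$$(i,j) * dcv$j) = (\<Sum>j\<in>{0..<n}. cv$i * G$$(i,j) * dcv$j)"
      by (simp add: sum_distrib_left mult_ac)
    also have "\<dots> = (\<Sum>j\<in>{0..<n}. w$i * G$$(i,j) * w$j)"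
    proof (rule sum.cong[OF refl])
      fix j assume j: "j \<in> {0..<n}"
      show "cv$i * G$$(i,j) * dcv$j = w$i * G$$(i,j) * w$j"
      proof (cases "i \<in> I \<and> j \<in> I \<and> G$$(i,j) \<noteq> 0")
        case True
        then have Dii: "D$$(i,i) > 0" and Djj: "D$$(j,j) > 0" unfolding I_def by auto
        from Gcomm[of i j] i j True have eqD: "D$$(i,j) = D$$(i,j)" "D$$(j,j) = D$$(i,i)" by auto
        have "sqrt (D$$(i,i)) * sqrt (D$$(j,j)) = D$$(j,j)" using eqD Dii by (simp add: real_sqrt_mult[symmetric])
        moreover have "i < n" "j < n" using i j by auto
        ultimately show ?thesis unfolding w_def dcv_def
          by (simp add: mult_ac)
      next
        case False
        then have "cv$i = 0 \<or> cv$j = 0 \<or> G$$(i,j) = 0" using i j unfolding cv_def by auto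
        then show ?thesis using i j unfolding w_def dcv_def by auto
      qed
    qed
    also have "\<dots> = w$i * (\<Sum>j\<in>{0..<n}. G$$(i,j) * w$j)"
      by (simp add: sum_distrib_left mult_ac)
    finally show "cv$i * (\<Sum>j\<in>{0..<n}. G$$(i,j) * dcv$j) = w$i * (\<Sum>j\<in>{0..<n}. G$$(i,j) * w$j)" .
  qed
  also have "\<dots> = (P *\<^sub>v w) \<bullet> (P *\<^sub>v w)" by (rule gram[OF w w, symmetric])
  finally have eq: "x \<bullet> (A *\<^sub>v x) = (P *\<^sub>v w) \<bullet> (P *\<^sub>v w)" .
  have w0: "w \<noteq> 0\<^sub>v n"
  proof
    assume "w = 0\<^sub>v n"
    obtain i where i: "i \<in> I" "c i \<noteq> 0" using c by blast
    then have "i < n" "D$$(i,i) > 0" unfolding I_def by auto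
    then have "w $ i \<noteq> 0" using i unfolding w_def cv_def by simp
    then show False using \<open>w = 0\<^sub>v n\<close> \<open>i < n\<close> by simp
  qed
  have Pw0: "P *\<^sub>v w \<noteq> 0\<^sub>v n"
  proof
    assume "P *\<^sub>v w = 0\<^sub>v n"
    then have "Q *\<^sub>v (P *\<^sub>v w) = 0\<^sub>v n" using Q by (intro eq_vecI, auto simp: scalar_prod_def)
    moreover have "Q *\<^sub>v (P *\<^sub>v w) = w" using Q P w QP by (simp add: assoc_mult_mat_vec[symmetric, of _ n n _ n])
    ultimately show False using w0 by simp
  qed
  have "(P *\<^sub>v w) \<bullet> (P *\<^sub>v w) > 0" by (rule real_vec_self_pos[OF _ Pw0], insert P w, simp)
  with eq le show False by simp
qed


lemma quad_sum:
  fixes x :: "nat \<Rightarrow> real"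
  shows "(\<Sum>i\<in>I. \<Sum>j\<in>I. x i * x j * (\<Sum>r\<in>R. f i r * f j r)) = (\<Sum>r\<in>R. (\<Sum>i\<in>I. f i r * x i)^2)"
proof -
  have "(\<Sum>r\<in>R. (\<Sum>i\<in>I. f i r * x i)^2) = (\<Sum>r\<in>R. \<Sum>i\<in>I. \<Sum>j\<in>I. x i * x j * (f i r * f j r))"
    unfolding power2_eq_square sum_product by (simp add: mult_ac)
  also have "\<dots> = (\<Sum>i\<in>I. \<Sum>r\<in>R. \<Sum>j\<in>I. x i * x j * (f i r * f j r))" by (rule sum.swap)
  also have "\<dots> = (\<Sum>i\<in>I. \<Sum>j\<in>I. \<Sum>r\<in>R. x i * x j * (f i r * f j r))" by (rule sum.cong[OF refl], rule sum.swap)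
  finally show ?thesis by (simp add: sum_distrib_left)
qed

lemma sq_sum: "(\<Sum>i\<in>I. \<Sum>j\<in>I. (x i::real) * x j) = (\<Sum>i\<in>I. x i)^2"
  unfolding power2_eq_square sum_product ..

lemma inertia_neg:
  fixes A P Q D U :: "real mat"
  assumes A: "A \<in> carrier_mat n n" and P: "P \<in> carrier_mat n n" and Q: "Q \<in> carrier_mat n n"
    and D: "D \<in> carrier_mat n n"
    and QP: "Q * P = 1\<^sub>m n" and PQ: "P * Q = 1\<^sub>m n" and AD: "A = P * D * Q"
    and diag: "\<forall>i<n. \<forall>j<n. i \<noteq> j \<longrightarrow> D$$(i,j) = 0"
    and sym: "transpose_mat A = A"
    and U: "U \<in> carrier_mat k n"
    and pos: "\<And>x. x \<in> carrier_vec n \<Longrightarrow> U *\<^sub>v x = 0\<^sub>v k \<Longrightarrow> x \<bullet> (A *\<^sub>v x) \<ge> 0"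
  shows "card {i. i < n \<and> D$$(i,i) < 0} \<le> k"
proof -
  have "card {i. i < n \<and> ((-1) \<cdot>\<^sub>m D)$$(i,i) > 0} \<le> k"
  proof (rule inertia[OF _ P Q _ QP PQ _ _ _ U])
    show "(-1) \<cdot>\<^sub>m A \<in> carrier_mat n n" using A by simp
    show "(-1) \<cdot>\<^sub>m D \<in> carrier_mat n n" using D by simp
    show "(-1) \<cdot>\<^sub>m A = P * ((-1) \<cdot>\<^sub>m D) * Q" unfolding AD using P D Q
      by (simp add: mult_smult_distrib mult_smult_assoc_mat[of _ n n _ n])
    show "\<forall>i<n. \<forall>j<n. i \<noteq> j \<longrightarrow> ((-1) \<cdot>\<^sub>m D)$$(i,j) = 0" using diag D by auto
    show "transpose_mat ((-1) \<cdot>\<^sub>m A) = (-1) \<cdot>\<^sub>m A" proof -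
      have "transpose_mat ((-1) \<cdot>\<^sub>m A) = (-1) \<cdot>\<^sub>m transpose_mat A" by (intro eq_matI, auto)
      then show ?thesis using sym by simp
    qed
    fix x :: "real vec" assume x: "x \<in> carrier_vec n" and Ux: "U *\<^sub>v x = 0\<^sub>v k"
    from pos[OF x Ux] have "x \<bullet> (A *\<^sub>v x) \<ge> 0" .
    moreover have "x \<bullet> (((-1) \<cdot>\<^sub>m A) *\<^sub>v x) = - (x \<bullet> (A *\<^sub>v x))"
    proof -
      have "((-1) \<cdot>\<^sub>m A) *\<^sub>v x = (-1) \<cdot>\<^sub>v (A *\<^sub>v x)"
        using A x by (intro eq_vecI) (auto simp: scalar_prod_def row_def sum_negf)
      then show ?thesis using A x by (simp add: scalar_prod_smult_distrib[of _ n])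
    qed
    ultimately show "x \<bullet> (((-1) \<cdot>\<^sub>m A) *\<^sub>v x) \<le> 0" by simp
  qed
  moreover have "{i. i < n \<and> ((-1) \<cdot>\<^sub>m D)$$(i,i) > 0} = {i. i < n \<and> D$$(i,i) < 0}" using D by auto
  ultimately show ?thesis by simp
qed

lemma shift_sim:
  fixes P D Q :: "real mat"
  assumes P: "P \<in> carrier_mat n n" and Q: "Q \<in> carrier_mat n n" and D: "D \<in> carrier_mat n n"
    and PQ: "P * Q = 1\<^sub>m n"
  shows "P * D * Q + s \<cdot>\<^sub>m 1\<^sub>m n = P * (D + s \<cdot>\<^sub>m 1\<^sub>m n) * Q"
proof -
  have "P * (D + s \<cdot>\<^sub>m 1\<^sub>m n) * Q = (P * D + P * (s \<cdot>\<^sub>m 1\<^sub>m n)) * Q"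
    using P D by (simp add: mult_add_distrib_mat[of _ n n _ n])
  also have "\<dots> = P * D * Q + P * (s \<cdot>\<^sub>m 1\<^sub>m n) * Q"
    using P D Q by (simp add: add_mult_distrib_mat[of _ n n _ _ n])
  also have "P * (s \<cdot>\<^sub>m 1\<^sub>m n) * Q = s \<cdot>\<^sub>m 1\<^sub>m n"
  proof -
    have "P * (s \<cdot>\<^sub>m 1\<^sub>m n) = s \<cdot>\<^sub>m P" using P by (simp add: mult_smult_distrib[of _ n n _ n])
    moreover have "(s \<cdot>\<^sub>m P) * Q = s \<cdot>\<^sub>m (P * Q)" using P Q by (simp add: mult_smult_assoc_mat[of _ n n _ n])
    ultimately show ?thesis using PQ by simp
  qed
  finally show ?thesis by simp
qed


lemma U_zero:
  fixes x :: "real vec"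
  assumes "x \<in> carrier_vec n" "mat k n f *\<^sub>v x = 0\<^sub>v k" "r < k"
  shows "(\<Sum>i\<in>{0..<n}. f (r,i) * x$i) = 0"
proof -
  have "(mat k n f *\<^sub>v x) $ r = (\<Sum>i\<in>{0..<n}. mat k n f $$ (r,i) * x$i)"
    by (rule mat_vec_index_sum[OF _ assms(1) assms(3)], simp)
  also have "\<dots> = (\<Sum>i\<in>{0..<n}. f (r,i) * x$i)" using assms(3) by simp
  finally show ?thesis using assms by simp
qed

lemma desc_count_gt:
  fixes L :: "real list"
  assumes desc: "\<And>i j. i \<le> j \<Longrightarrow> j < length L \<Longrightarrow> L!j \<le> L!i"
    and i: "i < length L" and gt: "L!i > c"
  shows "length (filter (\<lambda>x. x > c) L) \<ge> Suc i"
proof -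
  have "{0..<Suc i} \<subseteq> {t. t < length L \<and> L!t > c}"
  proof
    fix t assume "t \<in> {0..<Suc i}"
    then have t: "t \<le> i" by simp
    have "L!i \<le> L!t" using desc[OF t i] .
    then show "t \<in> {t. t < length L \<and> L!t > c}" using t i gt by simp
  qed
  from card_mono[OF _ this] show ?thesis unfolding length_filter_conv_card by simp
qed

lemma desc_count_lt:
  fixes L :: "real list"
  assumes desc: "\<And>i j. i \<le> j \<Longrightarrow> j < length L \<Longrightarrow> L!j \<le> L!i"
    and i: "i < length L" and lt: "L!i < c"
  shows "length (filter (\<lambda>x. x < c) L) \<ge> length L - i"
proof -
  have "{i..<length L} \<subseteq> {t. t < length L \<and> L!t < c}"
  proof
    fix t assume t: "t \<in> {i..<length L}"
    then have "L!t \<le> L!i" using desc[of i t] by simp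
    then show "t \<in> {t. t < length L \<and> L!t < c}" using t lt by simp
  qed
  from card_mono[OF _ this] show ?thesis unfolding length_filter_conv_card by simp
qed

lemma eigs_desc_props:
  fixes S :: "real mat"
  assumes "eigenvalue_mset S = mset ds"
  shows "mset (eigs_desc S) = mset ds" "length (eigs_desc S) = length ds"
    "\<And>i j. i \<le> j \<Longrightarrow> j < length (eigs_desc S) \<Longrightarrow> eigs_desc S ! j \<le> eigs_desc S ! i"
    "\<And>P. length (filter P (eigs_desc S)) = length (filter P ds)"
proof -
  let ?s = "sorted_list_of_multiset (mset ds)"
  have L: "eigs_desc S = rev ?s" unfolding eigs_desc_def assms ..
  show m: "mset (eigs_desc S) = mset ds" unfolding L by simp
  show l: "length (eigs_desc S) = length ds" using m by (metis size_mset)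
  fix P show "length (filter P (eigs_desc S)) = length (filter P ds)"
    by (metis m mset_filter size_mset)
next
  let ?s = "sorted_list_of_multiset (mset ds)"
  have L: "eigs_desc S = rev ?s" unfolding eigs_desc_def assms ..
  fix i j assume ij: "i \<le> j" "j < length (eigs_desc S)"
  have so: "sorted ?s" by simp
  have len: "length ?s = length (eigs_desc S)" unfolding L by simp
  have rj: "rev ?s ! j = ?s ! (length ?s - Suc j)" using ij len by (simp add: rev_nth)
  have ri: "rev ?s ! i = ?s ! (length ?s - Suc i)" using ij len by (simp add: rev_nth)
  have "?s ! (length ?s - Suc j) \<le> ?s ! (length ?s - Suc i)"
    by (rule sorted_nth_mono[OF so], use ij len in auto)
  then show "eigs_desc S ! j \<le> eigs_desc S ! i" unfolding L rj ri .
qed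


theorem mainTheorem6:
  fixes n d :: nat and v :: "nat \<Rightarrow> real vec" and a b :: real
  assumes dim: "\<And>i. i < n \<Longrightarrow> dim_vec (v i) = d"
    and unit: "\<And>i. i < n \<Longrightarrow> v i \<bullet> v i = 1"
    and ang: "\<And>i j. i < n \<Longrightarrow> j < n \<Longrightarrow> i \<noteq> j \<Longrightarrow> v i \<bullet> v j \<in> {a, b}"
    and ab: "-1 \<le> a" "a < b" "b < 1"
    and nd: "d < n"
  shows
    "(a + b \<ge> 0 \<longrightarrow>
        (\<forall>i. d + 1 \<le> i \<and> i \<le> n - 1 \<longrightarrow>
             eigs_desc (seidel_of n v a b) ! (i - 1) = (a + b - 2) / (b - a))
      \<and> eigs_desc (seidel_of n v a b) ! (n - 1) \<le> (a + b - 2) / (b - a))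
   \<and> (a + b < 0 \<longrightarrow>
        (\<forall>x \<in># eigenvalue_mset (seidel_of n v a b). (a + b - 2) / (b - a) \<le> x)
      \<and> n - d - 1 \<le> count (eigenvalue_mset (seidel_of n v a b)) ((a + b - 2) / (b - a))
      \<and> (d + 1 < n \<longrightarrow> eigs_desc (seidel_of n v a b) ! (n - 1) = (a + b - 2) / (b - a)))"
proof -
  define S where "S = seidel_of n v a b"
  define c where "c = (a + b - 2) / (b - a)"
  have ba: "b - a > 0" using ab by simp
  have S: "S \<in> carrier_mat n n" unfolding S_def seidel_of_def gram_def by simp
  have Sij: "S$$(i,j) = (1 / (b - a)) * (2 * (v i \<bullet> v j) - (a + b) + (a + b - 2) * (if i = j then 1 else 0))"
    if "i < n" "j < n" for i j
    using that unfolding S_def seidel_of_def gram_def by simp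
  have vsym: "v i \<bullet> v j = v j \<bullet> v i" if "i < n" "j < n" for i j
    by (rule comm_scalar_prod[OF carrier_vecI[OF dim[OF that(1)]] carrier_vecI[OF dim[OF that(2)]]])
  have Ssym: "S$$(i,j) = S$$(j,i)" if "i < n" "j < n" for i j
    unfolding Sij[OF that] Sij[OF that(2,1)] vsym[OF that] by (simp add: eq_commute)
  obtain es where es: "char_poly S = (\<Prod>e\<leftarrow>es. [:-e,1:])" using sym_real_split[OF S Ssym] by blast
  obtain P Q D where P: "P \<in> carrier_mat n n" and Q: "Q \<in> carrier_mat n n" and D: "D \<in> carrier_mat n n"
    and PQ: "P * Q = 1\<^sub>m n" and QP: "Q * P = 1\<^sub>m n" and SD: "S = P * D * Q"
    and diag: "\<forall>i<n. \<forall>j<n. i \<noteq> j \<longrightarrow> D$$(i,j) = 0"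
    and roots: "proots (char_poly S) = mset (diag_mat D)"
    using sym_diag[OF S Ssym es] by blast
  define ds where "ds = diag_mat D"
  have ev: "eigenvalue_mset S = mset ds" unfolding eigenvalue_mset_def ds_def roots ..
  have lds: "length ds = n" unfolding ds_def diag_mat_def using D by simp
  have dsi: "ds ! i = D$$(i,i)" if "i < n" for i unfolding ds_def diag_mat_def using D that by simp
  define A where "A = S + (-c) \<cdot>\<^sub>m 1\<^sub>m n"
  define D' where "D' = D + (-c) \<cdot>\<^sub>m 1\<^sub>m n"
  have A: "A \<in> carrier_mat n n" unfolding A_def using S by simp
  have D': "D' \<in> carrier_mat n n" unfolding D'_def using D by simp
  have AD: "A = P * D' * Q" unfolding A_def D'_def SD by (rule shift_sim[OF P Q D PQ])
  have diag': "\<forall>i<n. \<forall>j<n. i \<noteq> j \<longrightarrow> D'$$(i,j) = 0" unfolding D'_def using D diag by simp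
  have D'ii: "D'$$(i,i) = ds ! i - c" if "i < n" for i unfolding D'_def using D that dsi by simp
  have Aij: "A$$(i,j) = (2 * (v i \<bullet> v j) - (a + b)) / (b - a)" if "i < n" "j < n" for i j
    unfolding A_def using S that Sij[OF that] ba by (simp add: c_def field_simps)
  have Asym: "transpose_mat A = A"
    using A by (intro eq_matI, auto simp: Aij vsym)
  have form: "x \<bullet> (A *\<^sub>v x) = (2 * (\<Sum>r\<in>{0..<d}. (\<Sum>i\<in>{0..<n}. v i $ r * x$i)^2) - (a + b) * (\<Sum>i\<in>{0..<n}. x$i)^2) / (b - a)"
    if x: "x \<in> carrier_vec n" for x
  proof -
    have g: "v i \<bullet> v j = (\<Sum>r\<in>{0..<d}. v i $ r * v j $ r)" if "i < n" "j < n" for i j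
      using dim that by (simp add: scalar_prod_def)
    have "x \<bullet> (A *\<^sub>v x) = (\<Sum>i\<in>{0..<n}. x$i * (\<Sum>j\<in>{0..<n}. A$$(i,j) * x$j))"
      using x A by (simp add: scalar_prod_def mat_vec_index_sum[OF A x])
    also have "\<dots> = (\<Sum>i\<in>{0..<n}. \<Sum>j\<in>{0..<n}. (2 * (x$i * x$j * (\<Sum>r\<in>{0..<d}. v i $ r * v j $ r)) - (a + b) * (x$i * x$j)) / (b - a))"
    proof (intro sum.cong refl)
      fix i assume i: "i \<in> {0..<n}"
      let ?R = "\<lambda>j. (2 * (x$i * x$j * (\<Sum>r\<in>{0..<d}. v i $ r * v j $ r)) - (a + b) * (x$i * x$j)) / (b - a)"
      have "x$i * (\<Sum>j\<in>{0..<n}. A$$(i,j) * x$j) = (\<Sum>j\<in>{0..<n}. x$i * (A$$(i,j) * x$j))"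
        by (rule sum_distrib_left)
      also have "\<dots> = (\<Sum>j\<in>{0..<n}. ?R j)"
      proof (rule sum.cong[OF refl])
        fix j assume j: "j \<in> {0..<n}"
        let ?g = "\<Sum>r\<in>{0..<d}. v i $ r * v j $ r"
        have "x$i * (A$$(i,j) * x$j) = x$i * ((2 * ?g - (a + b)) / (b - a) * x$j)"
          using i j Aij g by simp
        also have "\<dots> = (2 * (x$i * x$j * ?g) - (a + b) * (x$i * x$j)) / (b - a)"
          using ba by (simp add: field_simps)
        finally show "x$i * (A$$(i,j) * x$j) = ?R j" .
      qed
      finally show "x$i * (\<Sum>j\<in>{0..<n}. A$$(i,j) * x$j) = (\<Sum>j\<in>{0..<n}. ?R j)" .
    qed
    also have "\<dots> = (2 * (\<Sum>i\<in>{0..<n}. \<Sum>j\<in>{0..<n}. x$i * x$j * (\<Sum>r\<in>{0..<d}. v i $ r * v j $ r)) - (a + b) * (\<Sum>i\<in>{0..<n}. \<Sum>j\<in>{0..<n}. x$i * x$j)) / (b - a)"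
      by (simp add: sum_divide_distrib[symmetric] sum_subtractf sum_distrib_left)
    also have "\<dots> = (2 * (\<Sum>r\<in>{0..<d}. (\<Sum>i\<in>{0..<n}. v i $ r * x$i)^2) - (a + b) * (\<Sum>i\<in>{0..<n}. x$i)^2) / (b - a)"
      unfolding quad_sum[where x="\<lambda>i. x$i" and f="\<lambda>i r. v i $ r"] sq_sum ..
    finally show ?thesis .
  qed
  have cnt: "card {i. i < n \<and> P' (D'$$(i,i))} = length (filter (\<lambda>x. P' (x - c)) ds)" for P'
  proof -
    have "{i. i < n \<and> P' (D'$$(i,i))} = {i. i < length ds \<and> P' (ds ! i - c)}" using lds D'ii by auto
    then show ?thesis unfolding length_filter_conv_card by simp
  qed
  define U1 where "U1 = mat d n (\<lambda>(r,i). v i $ r)"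
  define U2 where "U2 = mat 1 n (\<lambda>_. 1 :: real)"
  define U3 where "U3 = mat (Suc d) n (\<lambda>(r,i). if r < d then v i $ r else 1)"
  define U4 where "U4 = mat 0 n (\<lambda>_. 0 :: real)"
  have sq0: "(\<Sum>r\<in>{0..<d}. (\<Sum>i\<in>{0..<n}. v i $ r * x$i)^2) = 0"
    if "\<And>r. r < d \<Longrightarrow> (\<Sum>i\<in>{0..<n}. v i $ r * x$i) = 0" for x
    using that by simp
  have sqge: "(\<Sum>r\<in>{0..<d}. (\<Sum>i\<in>{0..<n}. v i $ r * x$i)^2) \<ge> 0" for x
    by (intro sum_nonneg, simp)
  have b1: "length (filter (\<lambda>x. x > c) ds) \<le> d" if abp: "a + b \<ge> 0"
  proof -
    have "card {i. i < n \<and> D'$$(i,i) > 0} \<le> d"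
    proof (rule inertia[OF A P Q D' QP PQ AD diag' Asym])
      show "U1 \<in> carrier_mat d n" unfolding U1_def by simp
      fix x :: "real vec" assume x: "x \<in> carrier_vec n" and Ux: "U1 *\<^sub>v x = 0\<^sub>v d"
      have "(\<Sum>r\<in>{0..<d}. (\<Sum>i\<in>{0..<n}. v i $ r * x$i)^2) = 0"
        by (rule sq0, insert U_zero[OF x Ux[unfolded U1_def]], auto)
      then show "x \<bullet> (A *\<^sub>v x) \<le> 0" unfolding form[OF x] using abp ba
        by (simp add: divide_nonpos_pos)
    qed
    then show ?thesis unfolding cnt[of "\<lambda>y. y > 0"] by simp
  qed
  have b2: "length (filter (\<lambda>x. x < c) ds) \<le> 1" if abp: "a + b \<ge> 0"
  proof -
    have "card {i. i < n \<and> D'$$(i,i) < 0} \<le> 1"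
    proof (rule inertia_neg[OF A P Q D' QP PQ AD diag' Asym])
      show "U2 \<in> carrier_mat 1 n" unfolding U2_def by simp
      fix x :: "real vec" assume x: "x \<in> carrier_vec n" and Ux: "U2 *\<^sub>v x = 0\<^sub>v 1"
      have "(\<Sum>i\<in>{0..<n}. x$i) = 0" using U_zero[OF x Ux[unfolded U2_def], of 0] by simp
      then show "x \<bullet> (A *\<^sub>v x) \<ge> 0" unfolding form[OF x] using sqge[of x] ba by simp
    qed
    then show ?thesis unfolding cnt[of "\<lambda>y. y < 0"] by simp
  qed
  have b3: "length (filter (\<lambda>x. x > c) ds) \<le> Suc d"
  proof -
    have "card {i. i < n \<and> D'$$(i,i) > 0} \<le> Suc d"
    proof (rule inertia[OF A P Q D' QP PQ AD diag' Asym])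
      show "U3 \<in> carrier_mat (Suc d) n" unfolding U3_def by simp
      fix x :: "real vec" assume x: "x \<in> carrier_vec n" and Ux: "U3 *\<^sub>v x = 0\<^sub>v (Suc d)"
      have "(\<Sum>r\<in>{0..<d}. (\<Sum>i\<in>{0..<n}. v i $ r * x$i)^2) = 0"
      proof (rule sq0)
        fix r assume r: "r < d"
        from U_zero[OF x Ux[unfolded U3_def], of r] r show "(\<Sum>i\<in>{0..<n}. v i $ r * x$i) = 0" by simp
      qed
      moreover have "(\<Sum>i\<in>{0..<n}. x$i) = 0" using U_zero[OF x Ux[unfolded U3_def], of d] by simp
      ultimately show "x \<bullet> (A *\<^sub>v x) \<le> 0" unfolding form[OF x] by simp
    qed
    then show ?thesis unfolding cnt[of "\<lambda>y. y > 0"] by simp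
  qed
  have b4: "length (filter (\<lambda>x. x < c) ds) \<le> 0" if abn: "a + b < 0"
  proof -
    have "card {i. i < n \<and> D'$$(i,i) < 0} \<le> 0"
    proof (rule inertia_neg[OF A P Q D' QP PQ AD diag' Asym])
      show "U4 \<in> carrier_mat 0 n" unfolding U4_def by simp
      fix x :: "real vec" assume x: "x \<in> carrier_vec n"
      have "(a + b) * (\<Sum>i\<in>{0..<n}. x$i)^2 \<le> 0" using abn by (simp add: mult_nonpos_nonneg)
      then show "x \<bullet> (A *\<^sub>v x) \<ge> 0" unfolding form[OF x] using sqge[of x] ba by simp
    qed
    then show ?thesis unfolding cnt[of "\<lambda>y. y < 0"] by simp
  qed
  let ?L = "eigs_desc S"
  note LP = eigs_desc_props[OF ev]
  have lL: "length ?L = n" using LP(2) lds by simp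
  have n1: "n \<ge> 1" using nd by simp
  have part1: "a + b \<ge> 0 \<longrightarrow>
        (\<forall>i. d + 1 \<le> i \<and> i \<le> n - 1 \<longrightarrow> ?L ! (i - 1) = c) \<and> ?L ! (n - 1) \<le> c"
  proof (intro impI conjI allI)
    assume abp: "a + b \<ge> 0"
    note B1 = b1[OF abp, folded LP(4)] and B2 = b2[OF abp, folded LP(4)]
    fix i assume i: "d + 1 \<le> i \<and> i \<le> n - 1"
    then have il: "i - 1 < length ?L" using lL nd by linarith
    show "?L ! (i - 1) = c"
    proof (rule ccontr)
      assume "?L ! (i - 1) \<noteq> c"
      then consider "?L ! (i - 1) > c" | "?L ! (i - 1) < c" by linarith
      then show False
      proof cases
        case 1
        from desc_count_gt[OF LP(3) il 1] B1 i show False by linarith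
      next
        case 2
        from desc_count_lt[OF LP(3) il 2] B2 i lL show False by linarith
      qed
    qed
  next
    assume abp: "a + b \<ge> 0"
    note B1 = b1[OF abp, folded LP(4)]
    have il: "n - 1 < length ?L" using lL n1 by simp
    show "?L ! (n - 1) \<le> c"
    proof (rule ccontr)
      assume "\<not> ?L ! (n - 1) \<le> c"
      then have "?L ! (n - 1) > c" by simp
      from desc_count_gt[OF LP(3) il this] B1 nd n1 show False by linarith
    qed
  qed
  have part2: "a + b < 0 \<longrightarrow>
        (\<forall>x \<in># mset ds. c \<le> x) \<and> n - d - 1 \<le> count (mset ds) c \<and> (d + 1 < n \<longrightarrow> ?L ! (n - 1) = c)"
  proof (intro impI conjI ballI)
    assume abn: "a + b < 0"
    have none: "filter (\<lambda>x. x < c) ds = []" using b4[OF abn] by simp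
    fix x assume "x \<in># mset ds"
    then have "x \<in> set ds" by simp
    then show "c \<le> x" using none by (metis filter_empty_conv not_le)
  next
    assume abn: "a + b < 0"
    have none: "length (filter (\<lambda>x. x < c) ds) = 0" using b4[OF abn] by simp
    have cnt_eq: "count (mset ds) c = length (filter (\<lambda>x. x = c) ds)"
      unfolding count_mset by (induct ds, auto)
    have s1: "length (filter (\<lambda>x. x < c) ds) + length (filter (\<lambda>x. \<not> x < c) ds) = length ds"
      by (rule sum_length_filter_compl)
    have s2: "length (filter (\<lambda>x. x = c) (filter (\<lambda>x. \<not> x < c) ds)) + length (filter (\<lambda>x. \<not> x = c) (filter (\<lambda>x. \<not> x < c) ds)) = length (filter (\<lambda>x. \<not> x < c) ds)"
      by (rule sum_length_filter_compl)
    have e1: "filter (\<lambda>x. x = c) (filter (\<lambda>x. \<not> x < c) ds) = filter (\<lambda>x. x = c) ds"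
      by (simp add: filter_filter, rule filter_cong, auto)
    have e2: "filter (\<lambda>x. \<not> x = c) (filter (\<lambda>x. \<not> x < c) ds) = filter (\<lambda>x. x > c) ds"
      by (simp add: filter_filter, rule filter_cong, auto)
    from s1 s2 none b3 lds show "n - d - 1 \<le> count (mset ds) c"
      unfolding cnt_eq e1 e2 by linarith
  next
    assume abn: "a + b < 0" and dn: "d + 1 < n"
    have none: "filter (\<lambda>x. x < c) ds = []" using b4[OF abn] by simp
    have il: "n - 1 < length ?L" using lL n1 by simp
    have "?L ! (n - 1) \<in> set ?L" using il by simp
    then have "?L ! (n - 1) \<in> set ds" using LP(1) by (metis set_mset_mset)
    then have ge: "?L ! (n - 1) \<ge> c" using none by (metis filter_empty_conv not_le)
    show "?L ! (n - 1) = c"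
    proof (rule ccontr)
      assume "?L ! (n - 1) \<noteq> c"
      with ge have gtc: "?L ! (n - 1) > c" by simp
      have cg: "Suc (n - 1) \<le> length (filter (\<lambda>x. x > c) ?L)"
        by (rule desc_count_gt[OF _ il gtc], rule LP(3), auto)
      then show False using b3 LP(4)[of "\<lambda>x. x > c"] dn n1 by linarith
    qed
  qed
  show ?thesis using part1 part2 unfolding S_def[symmetric] c_def[symmetric] ev by simp
qed

end
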